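(* For every integer $L\ge 0$, every integer $l\ge 1$ and every integer $n\ge 0$, $$S_L(n+1,l)=\sum_{k=l-1}^{n}\binom{n}{k}\binom{n+1}{k}^{L}S_L(k,l-1),$$ with $S_L(0,0)=1$ and $S_L(n,0)=0$ for $n\ge1$. Consequently all $S_L(n,l)$ are nonnegative integers (positive for $1\le l\le n$).
   Context: For an integer $L\ge 0$ let ${}_0F_L(z)=\sum_{n=0}^{\infty}\frac{z^n}{(n!)^{L+1}}$. Define the numbers $S_L(n,l)$ ($n,l\ge 0$; with $S_L(n,l)=0$ for $l>n$) by the formal power series identities $\frac{({}_0F_L(z)-1)^l}{l!}=\sum_{n\ge l}\frac{S_L(n,l)}{(n!)^{L+1}}z^n$ for each $l\ge 0$; equivalently $\exp\big(x({}_0F_L(z)-1)\big)=\sum_{n\ge0}\Big[\sum_{k=0}^{n}S_L(n,k)x^k\Big]\frac{z^n}{(n!)^{L+1}}$. For $L=0$ these are the Stirling numbers of the second kind. *)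

theory Defs
  imports Complex_Main "HOL-Computational_Algebra.Formal_Power_Series"
begin

definition hyp0F :: "nat \<Rightarrow> real fps" where
  "hyp0F L = Abs_fps (\<lambda>n. 1 / (fact n) ^ (L + 1))"

definition SL :: "nat \<Rightarrow> nat \<Rightarrow> nat \<Rightarrow> real" where
  "SL L n l = (fact n) ^ (L + 1) * fps_nth (fps_const (1 / fact l) * (hyp0F L - 1) ^ l) n"

end

theory Submission
  imports Defs
begin

unbundle fps_syntax

definition FF :: "nat \<Rightarrow> real fps" where "FF L = hyp0F L - 1"
definition GG :: "nat \<Rightarrow> nat \<Rightarrow> real fps" where
  "GG L l = fps_const (1 / fact l) * (FF L) ^ l"

lemma SL_GG: "SL L n l = (fact n) ^ (L + 1) * GG L l $ n"
  by (simp add: SL_def GG_def FF_def)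

lemma FF_nth: "FF L $ n = (if n = 0 then 0 else 1 / (fact n) ^ (L + 1))"
  by (simp add: FF_def hyp0F_def)

lemma FF_X: "\<exists>H. FF L = fps_X * H"
proof (intro exI[of _ "fps_shift 1 (FF L)"] fps_ext)
  fix n
  show "FF L $ n = (fps_X * fps_shift 1 (FF L)) $ n"
    by (cases n) (simp_all add: fps_X_mult_nth FF_nth)
qed

lemma GG_zero: assumes "k < l" shows "GG L l $ k = 0"
proof -
  obtain H where H: "FF L = fps_X * H" using FF_X by blast
  have "GG L l = fps_X ^ l * (fps_const (1 / fact l) * H ^ l)"
    by (simp add: GG_def H power_mult_distrib algebra_simps)
  then show ?thesis using assms by (simp add: fps_X_power_mult_nth)
qed

lemma SL_zero: "k < l \<Longrightarrow> SL L k l = 0"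
  by (simp add: SL_GG GG_zero)

lemma GG_deriv: assumes "l \<ge> 1" shows "fps_deriv (GG L l) = GG L (l - 1) * fps_deriv (FF L)"
proof -
  obtain m where l: "l = Suc m" using assms by (cases l) auto
  have d: "fps_deriv (FF L ^ l) = fps_const (of_nat l) * fps_deriv (FF L) * FF L ^ m"
    by (simp only: fps_deriv_power l diff_Suc_1)
  have c: "fps_const (1 / fact l) * fps_const (of_nat l) = (fps_const (1 / fact m) :: real fps)"
  proof -
    have c0: "(1 / fact l) * (of_nat l :: real) = 1 / fact m" by (simp add: l)
    show ?thesis by (simp only: fps_const_mult c0)
  qed
  have "fps_deriv (GG L l) = fps_const (1 / fact l) * (fps_const (of_nat l) * fps_deriv (FF L) * FF L ^ m)"
    unfolding GG_def fps_deriv_mult_const_left d ..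
  also have "\<dots> = (fps_const (1 / fact l) * fps_const (of_nat l)) * FF L ^ m * fps_deriv (FF L)"
    by (simp only: ac_simps)
  also have "\<dots> = GG L (l - 1) * fps_deriv (FF L)"
    unfolding c by (simp add: GG_def l)
  finally show ?thesis .
qed

lemma coef_id:
  assumes "i \<le> n"
  shows "(fact (n+1)) ^ (L+1) / real (n+1) * (real (n - i + 1) / (fact (n - i + 1)) ^ (L + 1))
          / (fact i) ^ (L+1)
        = real (n choose i) * real ((n + 1) choose i) ^ L"
proof -
  have b1: "real (n choose i) = fact n / (fact i * fact (n - i))" using binomial_fact assms by blast
  have b2: "real ((n+1) choose i) = fact (n+1) / (fact i * fact (n + 1 - i))"
    using binomial_fact[of i "n+1"] assms by simp
  have e1: "fact (n - i + 1) = (real (n - i + 1)) * fact (n - i)"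
    by (metis Suc_eq_plus1 fact_Suc of_nat_Suc)
  have e2: "(fact (n+1) :: real) = real (n+1) * fact n" by (simp add: algebra_simps)
  have e3: "n + 1 - i = n - i + 1" using assms by simp
  have nz: "real (n - i + 1) \<noteq> 0" by simp
  show ?thesis
    unfolding b1 b2 e3 e1
    apply (simp only: power_Suc[symmetric] Suc_eq_plus1[symmetric])
    apply (simp add: e2 power_divide power_mult_distrib field_simps del: of_nat_Suc)
    done
qed

lemma termid: "(d::real) \<noteq> 0 \<Longrightarrow> x * (g * (r * (1 / p))) = x * (r / p) / d * (d * g)"
  by (simp add: field_simps)

lemma recur:
  assumes "l \<ge> 1"
  shows "SL L (n + 1) l =
    (\<Sum>k = l - 1..n. real (n choose k) * real ((n + 1) choose k) ^ L * SL L k (l - 1))"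
proof -
  have "fps_deriv (GG L l) $ n = (GG L (l - 1) * fps_deriv (FF L)) $ n"
    using GG_deriv[OF assms] by simp
  then have "real (n+1) * GG L l $ (n+1) =
      (\<Sum>i=0..n. GG L (l-1) $ i * (real (n - i + 1) * (1 / (fact (n - i + 1)) ^ (L + 1))))"
    by (simp add: fps_mult_nth FF_nth)
  then have A: "GG L l $ (n+1) =
      (\<Sum>i=0..n. GG L (l-1) $ i * (real (n - i + 1) * (1 / (fact (n - i + 1)) ^ (L + 1)))) / real (n+1)"
    by (simp add: field_simps)
  have "SL L (n+1) l = (fact (n+1)) ^ (L+1) / real (n+1) *
      (\<Sum>i=0..n. GG L (l-1) $ i * (real (n - i + 1) * (1 / (fact (n - i + 1)) ^ (L + 1))))"
    unfolding SL_GG A by simp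
  also have "\<dots> = (\<Sum>i=0..n. (fact (n+1)) ^ (L+1) / real (n+1) *
      (real (n - i + 1) / (fact (n - i + 1)) ^ (L + 1)) / (fact i) ^ (L+1) * SL L i (l - 1))"
    unfolding sum_distrib_left
  proof (rule sum.cong[OF refl])
    fix i
    have nz: "(fact i :: real) ^ (L+1) \<noteq> 0" by simp
    show "(fact (n+1)) ^ (L+1) / real (n+1) *
      (GG L (l-1) $ i * (real (n - i + 1) * (1 / (fact (n - i + 1)) ^ (L + 1)))) =
      (fact (n+1)) ^ (L+1) / real (n+1) *
      (real (n - i + 1) / (fact (n - i + 1)) ^ (L + 1)) / (fact i) ^ (L+1) * SL L i (l - 1)"
      unfolding SL_GG using nz by (rule termid)
  qed
  also have "\<dots> = (\<Sum>i=0..n. real (n choose i) * real ((n + 1) choose i) ^ L * SL L i (l - 1))"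
    apply (rule sum.cong[OF refl])
    apply (subst coef_id)
     apply auto
    done
  also have "\<dots> = (\<Sum>k = l - 1..n. real (n choose k) * real ((n + 1) choose k) ^ L * SL L k (l - 1))"
    by (rule sum.mono_neutral_cong_right) (auto simp: SL_zero)
  finally show ?thesis .
qed

lemma sum_Nats: "(\<And>x. x \<in> A \<Longrightarrow> f x \<in> \<nat>) \<Longrightarrow> sum f A \<in> \<nat>"
  by (induct A rule: infinite_finite_induct) auto

lemma SL00: "SL L 0 0 = 1" by (simp add: SL_def)
lemma SLn0: "n \<ge> 1 \<Longrightarrow> SL L n 0 = 0" by (simp add: SL_def)

lemma SL_Nats: "SL L n l \<in> \<nat>"
proof (induction n arbitrary: l rule: less_induct)
  case (less N)
  show ?case
  proof (cases N)
    case 0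
    then show ?thesis by (cases l) (auto simp: SL00 SL_zero)
  next
    case (Suc n)
    show ?thesis
    proof (cases "l = 0")
      case True then show ?thesis using Suc by (simp add: SLn0)
    next
      case False
      have eq: "SL L N l = (\<Sum>k = l - 1..n. real (n choose k) * real ((n + 1) choose k) ^ L * SL L k (l - 1))"
        unfolding Suc Suc_eq_plus1 using recur[of l L n] False by simp
      show ?thesis unfolding eq
      proof (rule sum_Nats)
        fix k assume k: "k \<in> {l - 1..n}"
        have "SL L k (l - 1) \<in> \<nat>" using less.IH[of k "l - 1"] k Suc by simp
        moreover have "real (n choose k) * real ((n + 1) choose k) ^ L = real ((n choose k) * ((n + 1) choose k) ^ L)"
          by simp
        ultimately show "real (n choose k) * real ((n + 1) choose k) ^ L * SL L k (l - 1) \<in> \<nat>"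
          by (metis Nats_mult of_nat_in_Nats)
      qed
    qed
  qed
qed

lemma SL_nonneg: "SL L n l \<ge> 0"
  using SL_Nats[of L n l] by (metis Nats_cases of_nat_0_le_iff)

lemma SL_pos: "1 \<le> l \<Longrightarrow> l \<le> n \<Longrightarrow> SL L n l > 0"
proof (induction n arbitrary: l rule: less_induct)
  case (less N)
  then obtain n where N: "N = Suc n" by (cases N) auto
  have pos: "SL L (l - 1) (l - 1) > 0"
  proof (cases "l = 1")
    case True then show ?thesis by (simp add: SL00)
  next
    case False then show ?thesis using less.IH[of "l-1" "l-1"] less.prems N by auto
  qed
  have "0 < real (n choose (l-1)) * real ((n + 1) choose (l-1)) ^ L * SL L (l-1) (l - 1)"
  proof -
    have "0 < n choose (l-1)" "0 < (n+1) choose (l-1)" using less.prems N by auto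
    then show ?thesis using pos by simp
  qed
  also have "\<dots> \<le> (\<Sum>k = l - 1..n. real (n choose k) * real ((n + 1) choose k) ^ L * SL L k (l - 1))"
    by (rule member_le_sum) (use less.prems N in \<open>auto intro!: mult_nonneg_nonneg SL_nonneg\<close>)
  finally have "0 < (\<Sum>k = l - 1..n. real (n choose k) * real ((n + 1) choose k) ^ L * SL L k (l - 1))" .
  moreover have "SL L N l = (\<Sum>k = l - 1..n. real (n choose k) * real ((n + 1) choose k) ^ L * SL L k (l - 1))"
    unfolding N Suc_eq_plus1 using recur[of l L n] less.prems by blast
  ultimately show ?case by simp
qed

theorem mainTheorem2:
  shows "(\<forall>L l n. l \<ge> 1 \<longrightarrow>
            SL L (n + 1) l =
              (\<Sum>k = l - 1..n. real (n choose k) * real ((n + 1) choose k) ^ L * SL L k (l - 1)))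
       \<and> (\<forall>L. SL L 0 0 = 1)
       \<and> (\<forall>L n. n \<ge> 1 \<longrightarrow> SL L n 0 = 0)
       \<and> (\<forall>L n l. \<exists>m::nat. SL L n l = real m)
       \<and> (\<forall>L n l. 1 \<le> l \<and> l \<le> n \<longrightarrow> SL L n l > 0)"
proof -
  have A: "\<forall>L l n. l \<ge> 1 \<longrightarrow>
            SL L (n + 1) l =
              (\<Sum>k = l - 1..n. real (n choose k) * real ((n + 1) choose k) ^ L * SL L k (l - 1))"
    by (intro allI impI) (rule recur)
  have B: "\<forall>L n l. \<exists>m::nat. SL L n l = real m"
  proof (intro allI)
    fix L n l
    show "\<exists>m::nat. SL L n l = real m" using SL_Nats[of L n l] by (auto elim!: Nats_cases)
  qed
  have C: "\<forall>L n l. 1 \<le> l \<and> l \<le> n \<longrightarrow> SL L n l > 0"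
    by (intro allI impI) (erule conjE, erule (1) SL_pos)
  have D: "\<forall>L n. n \<ge> 1 \<longrightarrow> SL L n 0 = 0"
    by (intro allI impI) (erule SLn0)
  show ?thesis using A B C D SL00 by blast
qed

end
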